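(* Let $K_j\subset\mathbb{R}^n$ be a bounded, smooth, strictly convex set (each tangent plane touches $\partial K_j$ at a unique point), and let $F$ be a convex function on $\mathbb{R}^n$. Let $\mu=e^{-|x|^2/2}\,dx$, $\nu_j=e^{-F}1_{K_j}\,\mu$, and let $\nabla\varphi_j$ be the Brenier mapping transporting $\mu$ onto $c_j\nu_j$. Suppose $|x|\to\infty$ with $x/|x|$ converging to a unit vector $\mathbf{n}$. Then \[\nabla\varphi_j(x)\to y_{\mathbf n},\] uniformly in the direction $\mathbf n$, where $y_{\mathbf n}$ is the unique point on $\partial K_j$ whose outward unit normal is $\mathbf n$.
   Context: Brenier mapping: for positive measures $\mu,\nu$ on $\mathbb{R}^n$ with finite second moments, $\mu$ absolutely continuous, there is a convex function $\varphi:\mathbb{R}^n\to\mathbb{R}$ such that $T=\nabla\varphi$ satisfies $\mu(T^{-1}(E))=c\,\nu(E)$ for all Borel $E$, with $c=\mu(\mathbb{R}^n)/\nu(\mathbb{R}^n)$. *)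

theory Defs
  imports "HOL-Analysis.Analysis"
begin

definition grad :: "(real^'n \<Rightarrow> real) \<Rightarrow> real^'n \<Rightarrow> real^'n" where
  "grad f x = (\<chi> i. frechet_derivative f (at x) (axis i 1))"

coinductive Cinf :: "(real^'n \<Rightarrow> real) \<Rightarrow> bool" where
  "(\<forall>x. f differentiable (at x)) \<Longrightarrow>
   (\<forall>i. Cinf (\<lambda>x. frechet_derivative f (at x) (axis i 1))) \<Longrightarrow> Cinf f"

definition smooth_defining_function :: "(real^'n \<Rightarrow> real) \<Rightarrow> (real^'n) set \<Rightarrow> bool" where
  "smooth_defining_function \<rho> K \<longleftrightarrow>
     Cinf \<rho> \<and> interior K = {x. \<rho> x < 0} \<and> frontier K = {x. \<rho> x = 0} \<and>
     (\<forall>p \<in> frontier K. grad \<rho> p \<noteq> 0)"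

definition outward_normal :: "(real^'n \<Rightarrow> real) \<Rightarrow> real^'n \<Rightarrow> real^'n" where
  "outward_normal \<rho> p = grad \<rho> p /\<^sub>R norm (grad \<rho> p)"

definition strictly_convex_smooth :: "(real^'n \<Rightarrow> real) \<Rightarrow> (real^'n) set \<Rightarrow> bool" where
  "strictly_convex_smooth \<rho> K \<longleftrightarrow> convex K \<and>
     (\<forall>p \<in> frontier K. \<forall>q \<in> frontier K. (q - p) \<bullet> grad \<rho> p = 0 \<longrightarrow> q = p)"

definition gauss :: "(real^'n) measure" where
  "gauss = density lborel (\<lambda>x. ennreal (exp (- (norm x)\<^sup>2 / 2)))"

definition target :: "(real^'n \<Rightarrow> real) \<Rightarrow> (real^'n) set \<Rightarrow> (real^'n) measure" where
  "target F K = density gauss (\<lambda>x. ennreal (exp (- F x) * indicator K x))"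

end

theory Submission
  imports Defs
begin



lemma conv_tangent:
  fixes \<phi> :: "'a::euclidean_space \<Rightarrow> real"
  assumes cv: "convex_on UNIV \<phi>" and d: "(\<phi> has_derivative (\<lambda>h. g \<bullet> h)) (at x)"
  shows "\<phi> z \<ge> \<phi> x + g \<bullet> (z - x)"
proof -
  define f where "f t = \<phi> (x + t *\<^sub>R (z - x))" for t :: real
  have d1: "((\<lambda>t. x + t *\<^sub>R (z - x)) has_derivative (\<lambda>t. t *\<^sub>R (z - x))) (at 0)"
    by (auto intro!: derivative_eq_intros)
  have "(f has_derivative (\<lambda>t. g \<bullet> (t *\<^sub>R (z - x)))) (at 0)"
    unfolding f_def using has_derivative_compose[OF d1, of \<phi> "\<lambda>h. g \<bullet> h"] d by simp
  hence fd: "(f has_field_derivative (g \<bullet> (z - x))) (at 0)"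
  proof -
    have "(\<lambda>t. g \<bullet> (t *\<^sub>R (z - x))) = (*) (g \<bullet> (z - x))" by (auto simp: fun_eq_iff)
    thus ?thesis using \<open>(f has_derivative _) _\<close> unfolding has_field_derivative_def by simp
  qed
  have fc: "convex_on UNIV f"
  proof (rule convex_onI)
    fix s t u :: real assume u: "0 < u" "u < 1"
    have "f ((1 - u) *\<^sub>R s + u *\<^sub>R t) = \<phi> ((1 - u) *\<^sub>R (x + s *\<^sub>R (z - x)) + u *\<^sub>R (x + t *\<^sub>R (z - x)))"
      unfolding f_def by (simp add: algebra_simps)
    also have "\<dots> \<le> (1 - u) * \<phi> (x + s *\<^sub>R (z - x)) + u * \<phi> (x + t *\<^sub>R (z - x))"
      using cv u by (intro convex_onD) auto
    finally show "f ((1 - u) *\<^sub>R s + u *\<^sub>R t) \<le> (1 - u) * f s + u * f t" unfolding f_def by simp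
  qed auto
  have "f 1 - f 0 \<ge> (g \<bullet> (z - x)) * (1 - 0)"
    by (rule convex_on_imp_above_tangent[OF fc]) (use fd in auto)
  thus ?thesis unfolding f_def by simp
qed

lemma grad_mono:
  fixes \<phi> :: "'a::euclidean_space \<Rightarrow> real"
  assumes cv: "convex_on UNIV \<phi>" and "(\<phi> has_derivative (\<lambda>h. g \<bullet> h)) (at x)"
    and "(\<phi> has_derivative (\<lambda>h. w \<bullet> h)) (at z)"
  shows "(w - g) \<bullet> (z - x) \<ge> 0"
proof -
  have "\<phi> z \<ge> \<phi> x + g \<bullet> (z - x)" by (rule conv_tangent[OF assms(1,2)])
  moreover have "\<phi> x \<ge> \<phi> z + w \<bullet> (x - z)" by (rule conv_tangent[OF assms(1,3)])
  ultimately show ?thesis by (simp add: inner_diff_left inner_diff_right inner_commute)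
qed




lemma grad_works:
  fixes \<rho> :: "real^'n \<Rightarrow> real"
  assumes "\<rho> differentiable (at p)"
  shows "(\<rho> has_derivative (\<lambda>h. grad \<rho> p \<bullet> h)) (at p)"
proof -
  let ?L = "frechet_derivative \<rho> (at p)"
  have d: "(\<rho> has_derivative ?L) (at p)" using assms frechet_derivative_works by blast
  have lin: "linear ?L" using has_derivative_linear[OF d] .
  have eq: "?L h = grad \<rho> p \<bullet> h" for h
  proof -
    have "?L h = ?L (\<Sum>i\<in>UNIV. h$i *\<^sub>R axis i 1)"
      using basis_expansion[of h] by (simp add: scalar_mult_eq_scaleR)
    also have "\<dots> = (\<Sum>i\<in>UNIV. h$i * ?L (axis i 1))"
      by (simp add: linear_sum[OF lin] linear_scale[OF lin])
    also have "\<dots> = grad \<rho> p \<bullet> h"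
      by (simp add: grad_def inner_vec_def mult.commute)
    finally show ?thesis .
  qed
  have "?L = (\<lambda>h. grad \<rho> p \<bullet> h)" using eq by (rule ext)
  thus ?thesis using d by simp
qed

lemma dir_deriv:
  fixes \<rho> :: "'a::real_inner \<Rightarrow> real"
  assumes "(\<rho> has_derivative (\<lambda>h. G \<bullet> h)) (at p)"
  shows "((\<lambda>t. \<rho> (p + t *\<^sub>R v)) has_real_derivative (G \<bullet> v)) (at 0)"
proof -
  have d1: "((\<lambda>t. p + t *\<^sub>R v) has_derivative (\<lambda>t. t *\<^sub>R v)) (at 0)"
    by (auto intro!: derivative_eq_intros)
  have "((\<lambda>t. \<rho> (p + t *\<^sub>R v)) has_derivative (\<lambda>t. G \<bullet> (t *\<^sub>R v))) (at 0)"
    using has_derivative_compose[OF d1, of \<rho> "\<lambda>h. G \<bullet> h"] assms by simp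
  moreover have "(\<lambda>t. G \<bullet> (t *\<^sub>R v)) = (*) (G \<bullet> v)" by (auto simp: fun_eq_iff)
  ultimately show ?thesis unfolding has_field_derivative_def by simp
qed

locale geo =
  fixes K :: "(real^'n) set" and \<rho> :: "real^'n \<Rightarrow> real"
  assumes hasd: "\<And>p. (\<rho> has_derivative (\<lambda>h. grad \<rho> p \<bullet> h)) (at p)"
    and int_eq: "interior K = {x. \<rho> x < 0}"
    and fr_eq: "frontier K = {x. \<rho> x = 0}"
    and gnz: "\<And>p. p \<in> frontier K \<Longrightarrow> grad \<rho> p \<noteq> 0"
    and cvx: "convex K"
    and strictc: "\<And>p q. p \<in> frontier K \<Longrightarrow> q \<in> frontier K \<Longrightarrow> (q - p) \<bullet> grad \<rho> p = 0 \<Longrightarrow> q = p"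
    and intne: "interior K \<noteq> {}"
begin

lemma neg_dir:
  assumes "p \<in> frontier K" "grad \<rho> p \<bullet> v < 0"
  shows "\<exists>d>0. \<forall>t>0. t < d \<longrightarrow> p + t *\<^sub>R v \<in> interior K"
proof -
  from DERIV_neg_dec_right[OF dir_deriv[OF hasd[of p], of v] assms(2)]
  obtain d where "d > 0" "\<forall>h>0. h < d \<longrightarrow> \<rho> (p + h *\<^sub>R v) < \<rho> p" by auto
  moreover have "\<rho> p = 0" using assms(1) fr_eq by auto
  ultimately show ?thesis using int_eq by auto
qed

lemma support:
  assumes p: "p \<in> frontier K" and w: "w \<in> closure K"
  shows "(w - p) \<bullet> grad \<rho> p \<le> 0"
proof -
  have "interior K \<subseteq> {w. (w - p) \<bullet> grad \<rho> p \<le> 0}"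
  proof
    fix w assume wi: "w \<in> interior K"
    show "w \<in> {w. (w - p) \<bullet> grad \<rho> p \<le> 0}"
    proof (rule ccontr)
      assume "w \<notin> {w. (w - p) \<bullet> grad \<rho> p \<le> 0}"
      hence pos: "grad \<rho> p \<bullet> (w - p) > 0" by (simp add: inner_commute)
      from DERIV_pos_inc_right[OF dir_deriv[OF hasd[of p], of "w - p"] pos]
      obtain d where d: "d > 0" "\<forall>h>0. h < d \<longrightarrow> \<rho> p < \<rho> (p + h *\<^sub>R (w - p))" by auto
      define t where "t = min (d/2) (1/2)"
      have t: "0 < t" "t < d" "t < 1" using d by (auto simp: t_def)
      have r0: "\<rho> p = 0" using p fr_eq by auto
      have "p + t *\<^sub>R (w - p) = p - t *\<^sub>R (p - w)" by (simp add: algebra_simps)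
      also have "\<dots> \<in> interior K"
        using mem_interior_closure_convex_shrink[OF cvx wi, of p t] p t
        by (auto simp: frontier_def)
      finally have "\<rho> (p + t *\<^sub>R (w - p)) < 0" using int_eq by auto
      thus False using d t r0 by auto
    qed
  qed
  hence "closure (interior K) \<subseteq> {w. (w - p) \<bullet> grad \<rho> p \<le> 0}"
    by (intro closure_minimal) (auto intro!: closed_Collect_le continuous_intros)
  thus ?thesis using convex_closure_interior[OF cvx intne] w by auto
qed

lemma onormal_eq: "p \<in> frontier K \<Longrightarrow> grad \<rho> p = norm (grad \<rho> p) *\<^sub>R outward_normal \<rho> p"
  using gnz by (simp add: outward_normal_def)

lemma gn_inner: "p \<in> frontier K \<Longrightarrow> grad \<rho> p \<bullet> v = norm (grad \<rho> p) * (outward_normal \<rho> p \<bullet> v)"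
  using gnz by (simp add: outward_normal_def)

lemma gn_inner': "p \<in> frontier K \<Longrightarrow> v \<bullet> grad \<rho> p = norm (grad \<rho> p) * (v \<bullet> outward_normal \<rho> p)"
  using gn_inner by (simp add: inner_commute)

lemma onormal_unit: "p \<in> frontier K \<Longrightarrow> norm (outward_normal \<rho> p) = 1"
  using gnz by (simp add: outward_normal_def)

lemma support_n:
  assumes p: "p \<in> frontier K" and w: "w \<in> closure K"
  shows "w \<bullet> outward_normal \<rho> p \<le> p \<bullet> outward_normal \<rho> p"
proof -
  have "(w - p) \<bullet> grad \<rho> p \<le> 0" by (rule support[OF p w])
  hence "norm (grad \<rho> p) * ((w - p) \<bullet> outward_normal \<rho> p) \<le> 0"
    using gn_inner'[OF p] by simp
  moreover have "norm (grad \<rho> p) > 0" using gnz[OF p] by simp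
  ultimately have "(w - p) \<bullet> outward_normal \<rho> p \<le> 0"
    by (simp add: mult_le_0_iff)
  thus ?thesis by (simp add: inner_diff_left)
qed

lemma unique_normal:
  assumes p: "p \<in> frontier K" and q: "q \<in> frontier K"
    and e: "outward_normal \<rho> p = outward_normal \<rho> q"
  shows "p = q"
proof -
  have fc: "frontier K \<subseteq> closure K" by (simp add: frontier_def)
  have "q \<bullet> outward_normal \<rho> p \<le> p \<bullet> outward_normal \<rho> p" using support_n p q fc by auto
  moreover have "p \<bullet> outward_normal \<rho> p \<le> q \<bullet> outward_normal \<rho> p" using support_n[OF q, of p] p fc e by auto
  ultimately have "(q - p) \<bullet> outward_normal \<rho> p = 0" by (simp add: inner_diff_left)
  hence "(q - p) \<bullet> grad \<rho> p = 0" using gn_inner'[OF p] by simp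
  thus ?thesis using strictc[OF p q] by simp
qed

lemma maximizer:
  assumes n: "norm n = 1" and p: "p \<in> closure K"
    and mx: "\<forall>w\<in>closure K. w \<bullet> n \<le> p \<bullet> n"
  shows "p \<in> frontier K \<and> outward_normal \<rho> p = n"
proof -
  have pf: "p \<in> frontier K"
  proof (rule ccontr)
    assume "p \<notin> frontier K"
    hence "p \<in> interior K" using p by (auto simp: frontier_def)
    then obtain e where e: "e > 0" "ball p e \<subseteq> interior K" using open_contains_ball by (metis open_interior)
    have "p + (e/2) *\<^sub>R n \<in> ball p e" using e n by (simp add: dist_norm)
    hence "p + (e/2) *\<^sub>R n \<in> closure K" using e interior_subset closure_subset by blast
    hence "(p + (e/2) *\<^sub>R n) \<bullet> n \<le> p \<bullet> n" using mx by blast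
    moreover have "n \<bullet> n = 1" using n by (simp add: norm_eq_1)
    ultimately show False using e by (simp add: inner_add_left)
  qed
  let ?\<nu> = "outward_normal \<rho> p"
  have nu1: "norm ?\<nu> = 1" using onormal_unit[OF pf] .
  show ?thesis
  proof (rule conjI[OF pf], rule ccontr)
    assume ne: "?\<nu> \<noteq> n"
    have nn: "n \<bullet> n = 1" "?\<nu> \<bullet> ?\<nu> = 1" using n nu1 by (simp_all add: norm_eq_1)
    have "0 < (n - ?\<nu>) \<bullet> (n - ?\<nu>)" using ne by simp
    hence lt: "?\<nu> \<bullet> n < 1" using nn by (simp add: inner_diff_left inner_diff_right inner_commute)
    let ?v = "n - ?\<nu>"
    have "grad \<rho> p \<bullet> ?v = norm (grad \<rho> p) * (?\<nu> \<bullet> ?v)"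
      by (rule gn_inner[OF pf])
    also have "?\<nu> \<bullet> ?v = ?\<nu> \<bullet> n - 1" using nn by (simp add: inner_diff_right)
    finally have "grad \<rho> p \<bullet> ?v < 0" using lt gnz[OF pf]
      by (simp add: mult_pos_neg)
    from neg_dir[OF pf this] obtain d where d: "d > 0" "\<forall>t>0. t < d \<longrightarrow> p + t *\<^sub>R ?v \<in> interior K" by auto
    have "p + (d/2) *\<^sub>R ?v \<in> interior K" using d by simp
    hence "p + (d/2) *\<^sub>R ?v \<in> closure K" using interior_subset closure_subset by blast
    hence "(p + (d/2) *\<^sub>R ?v) \<bullet> n \<le> p \<bullet> n" using mx by blast
    moreover have "?v \<bullet> n = 1 - ?\<nu> \<bullet> n" using nn by (simp add: inner_diff_left)
    ultimately show False using d lt by (simp add: inner_add_left mult_le_0_iff)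
  qed
qed

lemma exists_normal:
  assumes bK: "bounded K" and n: "norm n = 1"
  shows "\<exists>y. y \<in> frontier K \<and> outward_normal \<rho> y = n"
proof -
  have "compact (closure K)" using bK by (simp add: compact_closure)
  moreover have "closure K \<noteq> {}" using intne interior_subset closure_subset by blast
  moreover have "continuous_on (closure K) (\<lambda>w. w \<bullet> n)" by (intro continuous_intros)
  ultimately obtain p where "p \<in> closure K" "\<forall>w\<in>closure K. w \<bullet> n \<le> p \<bullet> n"
    using continuous_attains_sup by blast
  thus ?thesis using maximizer[OF n] by blast
qed

lemma uniform:
  assumes bK: "bounded K" and e: "\<epsilon> > 0"
  shows "\<exists>\<eta>>0. \<forall>n y w. norm n = 1 \<longrightarrow> y \<in> frontier K \<longrightarrow> outward_normal \<rho> y = n \<longrightarrow>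
            w \<in> closure K \<longrightarrow> (y - w) \<bullet> n < \<eta> \<longrightarrow> norm (w - y) < \<epsilon>"
proof -
  define S where "S = closure K"
  have cS: "compact S" using bK by (simp add: compact_closure S_def)
  define C :: "((real^'n) \<times> (real^'n) \<times> (real^'n)) set" where
    "C = (sphere 0 1 \<times> S \<times> S) \<inter> {q. \<epsilon> \<le> norm (fst (snd q) - snd (snd q))} \<inter>
         (\<Inter>z\<in>S. {q. z \<bullet> fst q \<le> snd (snd q) \<bullet> fst q})"
  have "compact C" unfolding C_def
    by (intro compact_Int_closed closed_INT closed_Collect_le compact_Times cS compact_sphere
          continuous_intros ballI)
  have memC: "(n, w, y) \<in> C" if "norm n = 1" "y \<in> frontier K" "outward_normal \<rho> y = n"
      "w \<in> closure K" "\<epsilon> \<le> norm (w - y)" for n y w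
  proof -
    have "y \<in> S" using that(2) by (simp add: S_def frontier_def)
    moreover have "\<forall>z\<in>S. z \<bullet> n \<le> y \<bullet> n" using support_n[OF that(2)] that(3) by (auto simp: S_def)
    ultimately show ?thesis using that by (auto simp: C_def S_def)
  qed
  show ?thesis
  proof (cases "C = {}")
    case True
    show ?thesis
    proof (intro exI[of _ 1] conjI allI impI)
      fix n y w assume h: "norm (n::real^'n) = 1" "y \<in> frontier K" "outward_normal \<rho> y = n" "w \<in> closure K"
      show "norm (w - y) < \<epsilon>"
      proof (rule ccontr)
        assume "\<not> ?thesis"
        hence "(n, w, y) \<in> C" using memC h by simp
        thus False using True by simp
      qed
    qed simp
  next
    case False
    have "continuous_on C (\<lambda>q. (snd (snd q) - fst (snd q)) \<bullet> fst q)" by (intro continuous_intros)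
    then obtain q0 where q0: "q0 \<in> C" "\<forall>q\<in>C. (snd (snd q0) - fst (snd q0)) \<bullet> fst q0 \<le> (snd (snd q) - fst (snd q)) \<bullet> fst q"
      using continuous_attains_inf[OF \<open>compact C\<close> False] by blast
    obtain n0 w0 y0 where q0e: "q0 = (n0, w0, y0)" by (cases q0) auto
    have n0: "norm n0 = 1" and w0: "w0 \<in> S" and y0: "y0 \<in> S" and ey: "\<epsilon> \<le> norm (w0 - y0)"
      and mx: "\<forall>z\<in>S. z \<bullet> n0 \<le> y0 \<bullet> n0"
      using q0(1) unfolding q0e C_def by auto
    have pos: "(y0 - w0) \<bullet> n0 > 0"
    proof (rule ccontr)
      assume "\<not> ?thesis"
      hence "y0 \<bullet> n0 \<le> w0 \<bullet> n0" by (simp add: inner_diff_left)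
      hence mx2: "\<forall>z\<in>S. z \<bullet> n0 \<le> w0 \<bullet> n0" using mx by force
      have A: "y0 \<in> frontier K \<and> outward_normal \<rho> y0 = n0" using maximizer[OF n0] y0 mx by (auto simp: S_def)
      have B: "w0 \<in> frontier K \<and> outward_normal \<rho> w0 = n0" using maximizer[OF n0] w0 mx2 by (auto simp: S_def)
      have "w0 = y0" using unique_normal A B by auto
      thus False using ey e by simp
    qed
    show ?thesis
    proof (rule exI[of _ "(y0 - w0) \<bullet> n0"], intro conjI pos allI impI)
      fix n y w assume h: "norm (n::real^'n) = 1" "y \<in> frontier K" "outward_normal \<rho> y = n"
        "w \<in> closure K" "(y - w) \<bullet> n < (y0 - w0) \<bullet> n0"
      show "norm (w - y) < \<epsilon>"
      proof (rule ccontr)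
        assume "\<not> ?thesis"
        hence "(n, w, y) \<in> C" using memC h by simp
        hence "(y0 - w0) \<bullet> n0 \<le> (y - w) \<bullet> n" using q0(2) unfolding q0e by fastforce
        thus False using h by simp
      qed
    qed
  qed
qed

end



lemma gauss_summable:
  fixes N :: nat and V :: real
  shows "summable (\<lambda>k::nat. exp (- (real k)\<^sup>2 / 2) * (V * (real k + 1) ^ N))"
proof (rule summable_comparison_test')
  show "summable (\<lambda>k::nat. \<bar>V\<bar> * exp (-1) ^ k)"
    by (intro summable_mult summable_geometric) auto
  fix k :: nat assume k: "k \<ge> 2 * N + 2"
  have "(real k + 1) ^ N \<le> exp (real k) ^ N"
    by (intro power_mono) (auto simp: add.commute exp_ge_add_one_self)
  also have "\<dots> = exp (real N * real k)" by (simp add: exp_of_nat_mult[symmetric])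
  finally have a: "(real k + 1) ^ N \<le> exp (real N * real k)" .
  have "exp (- (real k)\<^sup>2 / 2) * (real k + 1) ^ N \<le> exp (- (real k)\<^sup>2 / 2) * exp (real N * real k)"
    using a by simp
  also have "\<dots> = exp (- (real k)\<^sup>2 / 2 + real N * real k)" by (rule exp_add[symmetric])
  also have "\<dots> \<le> exp (- real k)"
  proof -
    have "real k * (2 * real N + 2) \<le> real k * real k" using k by (intro mult_left_mono) auto
    hence "- (real k)\<^sup>2 / 2 + real N * real k \<le> - real k" by (simp add: power2_eq_square algebra_simps)
    thus ?thesis by simp
  qed
  also have "\<dots> = exp (-1) ^ k" by (simp add: exp_of_nat_mult[symmetric])
  finally have b: "exp (- (real k)\<^sup>2 / 2) * (real k + 1) ^ N \<le> exp (-1) ^ k" .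
  have "norm (exp (- (real k)\<^sup>2 / 2) * (V * (real k + 1) ^ N)) = \<bar>V\<bar> * (exp (- (real k)\<^sup>2 / 2) * (real k + 1) ^ N)"
    by (simp add: abs_mult)
  also have "\<dots> \<le> \<bar>V\<bar> * exp (-1) ^ k" using b by (intro mult_left_mono) auto
  finally show "norm (exp (- (real k)\<^sup>2 / 2) * (V * (real k + 1) ^ N)) \<le> \<bar>V\<bar> * exp (-1) ^ k" .
qed

lemma gauss_finite: "emeasure (gauss :: (real^'n) measure) UNIV < \<infinity>"
proof -
  let ?N = "DIM(real^'n)" and ?V = "unit_ball_vol (real DIM(real^'n))"
  define a where "a k = exp (- (real k)\<^sup>2 / 2)" for k :: nat
  have "emeasure (gauss :: (real^'n) measure) UNIV = (\<integral>\<^sup>+(x::real^'n). ennreal (exp (- (norm x)\<^sup>2 / 2)) \<partial>lborel)"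
    unfolding gauss_def by (subst emeasure_density) auto
  also have "\<dots> \<le> (\<integral>\<^sup>+x. (\<Sum>k. ennreal (a k) * indicator (cball (0::real^'n) (real k + 1)) x) \<partial>lborel)"
  proof (intro nn_integral_mono)
    fix x :: "real^'n"
    define k where "k = nat \<lfloor>norm x\<rfloor>"
    have k0: "real k = real_of_int \<lfloor>norm x\<rfloor>" unfolding k_def by simp
    have k1: "real k \<le> norm x" "norm x \<le> real k + 1"
      using k0 of_int_floor_le[of "norm x"] real_of_int_floor_add_one_ge[of "norm x"] by linarith+
    have "(real k)\<^sup>2 \<le> (norm x)\<^sup>2" using k1 by (intro power_mono) auto
    hence "exp (- (norm x)\<^sup>2 / 2) \<le> a k" unfolding a_def by simp
    also have "ennreal (a k) = ennreal (a k) * indicator (cball (0::real^'n) (real k + 1)) x"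
      using k1 by (simp add: indicator_def)
    also have "\<dots> \<le> (\<Sum>k. ennreal (a k) * indicator (cball (0::real^'n) (real k + 1)) x)"
    proof -
      have "(\<Sum>i\<in>{k}. ennreal (a i) * indicator (cball (0::real^'n) (real i + 1)) x)
          \<le> (\<Sum>k. ennreal (a k) * indicator (cball (0::real^'n) (real k + 1)) x)"
        by (rule sum_le_suminf) (auto intro: summableI)
      thus ?thesis by (simp only: sum.insert_remove[OF finite.emptyI] empty_Diff sum.empty add_0_right)
    qed
    finally show "ennreal (exp (- (norm x)\<^sup>2 / 2)) \<le> (\<Sum>k. ennreal (a k) * indicator (cball (0::real^'n) (real k + 1)) x)"
      by (simp add: ennreal_leI)
  qed
  also have "\<dots> = (\<Sum>k. \<integral>\<^sup>+x. ennreal (a k) * indicator (cball (0::real^'n) (real k + 1)) x \<partial>lborel)"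
    by (intro nn_integral_suminf borel_measurable_times_ennreal borel_measurable_indicator borel_closed) auto
  also have "\<dots> = (\<Sum>k. ennreal (a k * (?V * (real k + 1) ^ ?N)))"
    by (simp add: nn_integral_cmult_indicator emeasure_cball)
       (intro suminf_cong, simp add: ennreal_mult'' unit_ball_vol_nonneg a_def)
  also have "\<dots> = ennreal (\<Sum>k. a k * (?V * (real k + 1) ^ ?N))"
    using gauss_summable[of "unit_ball_vol (real DIM(real^'n))" "DIM(real^'n)"]
    by (intro suminf_ennreal2) (auto simp: a_def unit_ball_vol_nonneg intro!: mult_nonneg_nonneg)
  also have "\<dots> < \<infinity>" by simp
  finally show ?thesis .
qed

lemma AE_ball:
  fixes c :: "'a::euclidean_space"
  assumes "AE x in lborel. P x" "r > 0"
  shows "\<exists>z\<in>ball c r. P z"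
proof (rule ccontr)
  assume nz: "\<not> (\<exists>z\<in>ball c r. P z)"
  from AE_E[OF assms(1)] obtain N where N: "{x \<in> space lborel. \<not> P x} \<subseteq> N" "emeasure lborel N = 0" "N \<in> sets lborel" by blast
  have "ball c r \<subseteq> N" using N(1) nz by auto
  hence "emeasure lborel (ball c r) \<le> emeasure lborel N" by (intro emeasure_mono N(3))
  hence "emeasure lborel (ball c r) = 0" using N(2) by simp
  hence "measure lborel (ball c r) = 0" by (simp add: measure_def)
  thus False using content_ball_pos[OF assms(2), of c] by simp
qed

lemma dens_lower:
  fixes f :: "'a::euclidean_space \<Rightarrow> ennreal"
  assumes "f \<in> borel_measurable borel" "B \<in> sets borel" "\<And>x. x \<in> B \<Longrightarrow> m \<le> f x"
  shows "m * emeasure lborel B \<le> emeasure (density lborel f) B"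
proof -
  have "m * emeasure lborel B = (\<integral>\<^sup>+x. m * indicator B x \<partial>lborel)"
    using assms(2) by (simp add: nn_integral_cmult_indicator)
  also have "\<dots> \<le> (\<integral>\<^sup>+x. f x * indicator B x \<partial>lborel)"
    using assms(3) by (intro nn_integral_mono) (auto simp: indicator_def)
  also have "\<dots> = emeasure (density lborel f) B" using assms by (subst emeasure_density) auto
  finally show ?thesis .
qed




lemma AE_gauss_iff: "(AE x in (gauss::(real^'n) measure). Q x) \<longleftrightarrow> (AE x in lborel. Q x)"
  unfolding gauss_def by (subst AE_density) auto

lemma sets_gauss[simp]: "sets (gauss::(real^'n) measure) = sets borel"
  by (simp add: gauss_def)

lemma space_gauss[simp]: "space (gauss::(real^'n) measure) = UNIV"
  by (simp add: gauss_def)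

lemma target_eq:
  fixes K :: "(real^'n) set" and F :: "real^'n \<Rightarrow> real"
  assumes cvx: "convex K" and Fc: "continuous_on UNIV F"
  shows "target F K = density lborel (\<lambda>x. ennreal (exp (- (norm x)\<^sup>2 / 2) * exp (- F x) * indicator (interior K) x))"
proof -
  have Fm: "F \<in> borel_measurable borel" using Fc by (intro borel_measurable_continuous_onI)
  have "frontier K \<in> null_sets lborel"
    using negligible_convex_frontier[OF cvx]
    by (auto simp: null_sets_completion_iff negligible_iff_null_sets)
  hence "AE x in lborel. x \<notin> frontier K" by (rule AE_not_in)
  hence ae: "AE x in (gauss::(real^'n) measure). x \<notin> frontier K" by (simp add: AE_gauss_iff)
  have "AE x in (gauss::(real^'n) measure).
          ennreal (exp (- F x) * indicator K x) = ennreal (exp (- F x) * indicator (interior K) x)"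
    using ae
  proof (rule AE_mp, intro AE_I2 impI)
    fix x assume "x \<notin> frontier K"
    hence "x \<in> K \<longleftrightarrow> x \<in> interior K" using interior_subset closure_subset by (auto simp: frontier_def)
    thus "ennreal (exp (- F x) * indicator K x) = ennreal (exp (- F x) * indicator (interior K) x)"
      by (simp add: indicator_def)
  qed
  hence "target F K = density gauss (\<lambda>x. ennreal (exp (- F x) * indicator (interior K) x))"
    unfolding target_def density_def
    by (intro arg_cong[where f="measure_of _ _"] ext nn_integral_cong_AE) (auto elim!: AE_mp)
  also have "\<dots> = density lborel (\<lambda>x. ennreal (exp (- (norm x)\<^sup>2 / 2)) * ennreal (exp (- F x) * indicator (interior K) x))"
    unfolding gauss_def using Fm by (intro density_density_eq) auto
  also have "\<dots> = density lborel (\<lambda>x. ennreal (exp (- (norm x)\<^sup>2 / 2) * exp (- F x) * indicator (interior K) x))"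
    by (intro arg_cong[where f="density lborel"] ext) (simp add: ennreal_mult'' mult.assoc)
  finally show ?thesis .
qed




lemma gauss_pos: "measure gauss (UNIV::(real^'n) set) > 0"
proof -
  have finG: "finite_measure (gauss::(real^'n) measure)"
    using gauss_finite[where 'n='n] by (intro finite_measureI) simp
  have gauss_eq: "(gauss::(real^'n) measure) = density lborel (\<lambda>x. ennreal (exp (- (norm x)\<^sup>2 / 2)))"
    by (simp add: gauss_def)
  let ?V = "unit_ball_vol (real DIM(real^'n))"
  show ?thesis
  proof -
    have "ennreal (exp (- 1 / 2)) * emeasure lborel (ball (0::real^'n) 1) \<le> emeasure gauss (ball (0::real^'n) 1)"
      unfolding gauss_eq
    proof (rule dens_lower)
      fix x :: "real^'n" assume "x \<in> ball 0 1"
      hence "(norm x)\<^sup>2 \<le> 1" by (simp add: abs_square_le_1)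
      thus "ennreal (exp (- 1 / 2)) \<le> ennreal (exp (- (norm x)\<^sup>2 / 2))" by (intro ennreal_leI) simp
    qed auto
    moreover have "emeasure lborel (ball (0::real^'n) 1) = ennreal ?V" by (simp add: emeasure_ball)
    ultimately have "ennreal (exp (- 1 / 2) * ?V) \<le> ennreal (measure gauss (ball (0::real^'n) 1))"
      by (simp add: finite_measure.emeasure_eq_measure[OF finG] ennreal_mult'')
    hence "exp (- 1 / 2) * ?V \<le> measure gauss (ball (0::real^'n) 1)"
      by (subst (asm) ennreal_le_iff) auto
    moreover have "measure gauss (ball (0::real^'n) 1) \<le> measure gauss (UNIV::(real^'n) set)"
      by (intro finite_measure.finite_measure_mono[OF finG]) auto
    moreover have "exp (- 1 / 2) * ?V > 0" by simp
    ultimately show ?thesis by linarith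
  qed
qed

lemma push_const:
  fixes T :: "real^'n \<Rightarrow> real^'n" and N :: "(real^'n) measure"
  assumes "\<forall>E \<in> sets borel. measure gauss (T -` E) = (measure (gauss::(real^'m) measure) UNIV / measure N UNIV) * measure N E"
    and "measure N UNIV > 0"
  shows "\<exists>cc>0. \<forall>E \<in> sets borel. measure gauss (T -` E) = cc * measure N E"
  using assms gauss_pos[where 'n='m] by (intro exI[of _ "measure (gauss::(real^'m) measure) UNIV / measure N UNIV"]) auto

theorem lemma2p1:
  fixes K :: "(real^'n) set" and \<rho> F \<phi> :: "real^'n \<Rightarrow> real"
    and T :: "real^'n \<Rightarrow> real^'n"
  assumes bounded: "bounded K"
    and smooth: "smooth_defining_function \<rho> K"
    and strict: "strictly_convex_smooth \<rho> K"
    and F_convex: "convex_on UNIV F"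
    and phi_convex: "convex_on UNIV \<phi>"
    and T_meas: "T \<in> borel_measurable borel"
    and T_grad: "AE x in lborel. (\<phi> has_derivative (\<lambda>h. T x \<bullet> h)) (at x)"
    and push: "\<forall>E \<in> sets borel. measure gauss (T -` E) =
                 (measure gauss UNIV / measure (target F K) UNIV) * measure (target F K) E"
  shows "(\<forall>n::real^'n. norm n = 1 \<longrightarrow>
            (\<exists>!y. y \<in> frontier K \<and> outward_normal \<rho> y = n)) \<and>
         (\<forall>\<epsilon>>0. \<exists>R>0. \<exists>\<delta>>0. \<forall>n y x g. norm n = 1 \<longrightarrow> y \<in> frontier K \<longrightarrow>
            outward_normal \<rho> y = n \<longrightarrow> norm x > R \<longrightarrow> norm (x /\<^sub>R norm x - n) < \<delta> \<longrightarrow>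
            (\<phi> has_derivative (\<lambda>h. g \<bullet> h)) (at x) \<longrightarrow> dist g y < \<epsilon>)"
proof -
  have Cinf: "Cinf \<rho>" and int_eq: "interior K = {x. \<rho> x < 0}" and fr_eq: "frontier K = {x. \<rho> x = 0}"
    and gnz: "\<And>p. p \<in> frontier K \<Longrightarrow> grad \<rho> p \<noteq> 0"
    using smooth unfolding smooth_defining_function_def by auto
  have diff: "\<And>x. \<rho> differentiable (at x)" using Cinf by (cases rule: Cinf.cases) auto
  have hasd: "\<And>p. (\<rho> has_derivative (\<lambda>h. grad \<rho> p \<bullet> h)) (at p)" using grad_works diff by blast
  have cvx: "convex K" and strictc: "\<And>p q. p \<in> frontier K \<Longrightarrow> q \<in> frontier K \<Longrightarrow> (q - p) \<bullet> grad \<rho> p = 0 \<Longrightarrow> q = p"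
    using strict unfolding strictly_convex_smooth_def by auto
  have Fc: "continuous_on UNIV F" using convex_on_continuous[OF open_UNIV F_convex] .
  obtain M where M: "M > 0" "\<And>w. w \<in> closure K \<Longrightarrow> norm w \<le> M"
    using bounded_closure[OF bounded] bounded_pos by metis
  have "bounded (F ` cball 0 M)"
    by (intro compact_imp_bounded compact_continuous_image continuous_on_subset[OF Fc]) auto
  then obtain Fb where Fb: "\<And>x. x \<in> cball 0 M \<Longrightarrow> \<bar>F x\<bar> \<le> Fb"
    unfolding bounded_iff by (metis imageI real_norm_def)
  define hK where "hK x = ennreal (exp (- (norm x)\<^sup>2 / 2) * exp (- F x) * indicator (interior K) x)" for x
  have nu_eq: "target F K = density lborel hK" unfolding hK_def by (rule target_eq[OF cvx Fc])
  have hK_meas: "hK \<in> borel_measurable borel"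
    unfolding hK_def using Fc by (intro measurable_compose[OF _ measurable_ennreal] borel_measurable_times
       borel_measurable_indicator borel_measurable_continuous_onI) (auto intro!: continuous_intros)
  have sets_nu[simp]: "sets (target F K) = sets borel" by (simp add: nu_eq)
  have nu_fin: "emeasure (target F K) UNIV < \<infinity>"
  proof -
    have "emeasure (target F K) UNIV = (\<integral>\<^sup>+x. hK x \<partial>lborel)"
      unfolding nu_eq using hK_meas by (subst emeasure_density) auto
    also have "\<dots> \<le> (\<integral>\<^sup>+x. ennreal (exp Fb) * indicator (cball (0::real^'n) M) x \<partial>lborel)"
    proof (rule nn_integral_mono)
      fix x :: "real^'n"
      assume "x \<in> space lborel"
      show "hK x \<le> ennreal (exp Fb) * indicator (cball 0 M) x"
      proof (cases "x \<in> interior K")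
        case True
        hence xM: "x \<in> cball 0 M" using M(2) interior_subset closure_subset by fastforce
        have "exp (- (norm x)\<^sup>2 / 2) * exp (- F x) \<le> 1 * exp Fb"
          using Fb[OF xM] by (intro mult_mono) auto
        thus ?thesis using True xM by (simp add: hK_def ennreal_leI)
      qed (simp add: hK_def)
    qed
    also have "\<dots> = ennreal (exp Fb) * emeasure lborel (cball (0::real^'n) M)"
      by (simp add: nn_integral_cmult_indicator)
    also have "\<dots> < \<infinity>" using emeasure_lborel_cball_finite[of "0::real^'n" M] by (simp add: ennreal_mult_eq_top_iff less_top[symmetric])
    finally show ?thesis .
  qed
  have finN: "finite_measure (target F K)"
    using nu_fin by (intro finite_measureI) (simp add: nu_eq)
  have finG: "finite_measure (gauss::(real^'n) measure)"
    using gauss_finite[where 'n='n] by (intro finite_measureI) simp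
  have gauss_eq: "(gauss::(real^'n) measure) = density lborel (\<lambda>x. ennreal (exp (- (norm x)\<^sup>2 / 2)))"
    by (simp add: gauss_def)
  let ?V = "unit_ball_vol (real DIM(real^'n))" and ?N = "DIM(real^'n)"
  have Vpos: "?V > 0" by simp
  define m1 where "m1 = exp (- M\<^sup>2 / 2) * exp (- Fb)"
  have m1pos: "m1 > 0" by (simp add: m1_def)
  have ball_lower: "m1 * (?V * r ^ ?N) \<le> measure (target F K) (ball c r)"
    if "r > 0" "ball c r \<subseteq> interior K" for c :: "real^'n" and r
  proof -
    have "ennreal m1 * emeasure lborel (ball c r) \<le> emeasure (target F K) (ball c r)"
      unfolding nu_eq
    proof (rule dens_lower[OF hK_meas])
      fix x assume "x \<in> ball c r"
      hence xi: "x \<in> interior K" using that by auto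
      hence xM: "x \<in> cball 0 M" using M(2) interior_subset closure_subset by fastforce
      have "(norm x)\<^sup>2 \<le> M\<^sup>2" using xM by (intro power_mono) auto
      hence "exp (- M\<^sup>2 / 2) \<le> exp (- (norm x)\<^sup>2 / 2)" by simp
      moreover have "exp (- Fb) \<le> exp (- F x)" using Fb[OF xM] by simp
      ultimately have "m1 \<le> exp (- (norm x)\<^sup>2 / 2) * exp (- F x)"
        unfolding m1_def by (intro mult_mono) auto
      thus "ennreal m1 \<le> hK x" using xi by (simp add: hK_def ennreal_leI)
    qed auto
    moreover have "emeasure lborel (ball c r) = ennreal (?V * r ^ ?N)" using that by (simp add: emeasure_ball)
    moreover have "ennreal m1 * ennreal (?V * r ^ ?N) = ennreal (m1 * (?V * r ^ ?N))"
      using m1pos that by (intro ennreal_mult[symmetric]) auto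
    ultimately have "ennreal (m1 * (?V * r ^ ?N)) \<le> ennreal (measure (target F K) (ball c r))"
      by (simp add: finite_measure.emeasure_eq_measure[OF finN])
    thus ?thesis by (subst (asm) ennreal_le_iff) auto
  qed
  have intne: "interior K \<noteq> {}"
  proof
    assume ie: "interior K = {}"
    hence "hK = (\<lambda>x. 0)" by (simp add: hK_def fun_eq_iff)
    hence "emeasure (target F K) UNIV = 0" unfolding nu_eq by (simp add: emeasure_density)
    hence "measure (target F K) UNIV = 0" by (simp add: measure_def)
    hence "measure gauss (T -` UNIV) = 0" using push[rule_format, of UNIV] by simp
    thus False using gauss_pos[where 'n='n] by simp
  qed
  then obtain a0 where a0: "a0 \<in> interior K" by blast
  then obtain r0 where r0: "r0 > 0" "ball a0 r0 \<subseteq> interior K"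
    using open_contains_ball open_interior by blast
  have mN: "measure (target F K) UNIV > 0"
  proof -
    have "m1 * (?V * r0 ^ ?N) \<le> measure (target F K) (ball a0 r0)" by (rule ball_lower[OF r0])
    also have "\<dots> \<le> measure (target F K) UNIV"
      by (rule finite_measure.finite_measure_mono[OF finN]) auto
    finally show ?thesis using m1pos r0 by (smt (verit) Vpos mult_pos_pos zero_less_power)
  qed
  obtain cc where cc: "cc > 0" "\<And>E. E \<in> sets borel \<Longrightarrow> measure gauss (T -` E) = cc * measure (target F K) E"
    using push_const[OF push mN] by blast
  have Tin: "AE x in lborel. T x \<in> closure K"
  proof -
    define E0 where "E0 = - closure K"
    have E0b: "E0 \<in> sets borel" unfolding E0_def by (intro borel_open) auto
    have "emeasure (target F K) E0 = (\<integral>\<^sup>+x. hK x * indicator E0 x \<partial>lborel)"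
      unfolding nu_eq using hK_meas E0b by (subst emeasure_density) auto
    also have "\<dots> = (\<integral>\<^sup>+(x::real^'n). 0 \<partial>lborel)"
      using interior_subset closure_subset
      by (intro nn_integral_cong) (auto simp: hK_def E0_def indicator_def)
    finally have "measure (target F K) E0 = 0" by (simp add: measure_def)
    hence "measure gauss (T -` E0) = 0" using cc(2)[OF E0b] by simp
    moreover have TE: "T -` E0 \<in> sets (gauss::(real^'n) measure)"
      using measurable_sets[OF T_meas E0b] by simp
    ultimately have "emeasure (gauss::(real^'n) measure) (T -` E0) = 0"
      using finite_measure.emeasure_eq_measure[OF finG] by simp
    hence "T -` E0 \<in> null_sets gauss" using TE by (intro null_setsI) auto
    hence "AE x in (gauss::(real^'n) measure). x \<notin> T -` E0" by (rule AE_not_in)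
    thus ?thesis by (simp add: AE_gauss_iff E0_def)
  qed
  have P: "AE x in lborel. T x \<in> closure K \<and> (\<phi> has_derivative (\<lambda>h. T x \<bullet> h)) (at x)"
    using Tin T_grad by eventually_elim auto
  have gcl: "g \<in> closure K" if dg: "(\<phi> has_derivative (\<lambda>h. g \<bullet> h)) (at x)" for x g
  proof (rule ccontr)
    assume gn: "g \<notin> closure K"
    obtain a b where ab: "a \<bullet> g < b" "\<And>w. w \<in> closure K \<Longrightarrow> a \<bullet> w > b"
      using separating_hyperplane_closed_point[OF convex_closure[OF cvx] closed_closure gn] by blast
    define \<gamma> where "\<gamma> = b - a \<bullet> g"
    have \<gamma>: "\<gamma> > 0" using ab by (simp add: \<gamma>_def)
    define L where "L = M + norm g + 1"
    have L: "L > 0" using M by (simp add: L_def add_pos_nonneg)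
    obtain z where z: "z \<in> ball (x - a) (\<gamma> / (2 * L))" "T z \<in> closure K"
      "(\<phi> has_derivative (\<lambda>h. T z \<bullet> h)) (at z)"
      using AE_ball[OF P, of "\<gamma> / (2 * L)" "x - a"] \<gamma> L by auto
    define w where "w = T z"
    define e where "e = z - (x - a)"
    have ne: "norm e < \<gamma> / (2 * L)" using z(1) by (simp add: e_def dist_norm norm_minus_commute)
    have mono: "(w - g) \<bullet> (z - x) \<ge> 0" unfolding w_def by (rule grad_mono[OF phi_convex dg z(3)])
    have zx: "z - x = e - a" by (simp add: e_def)
    have "(w - g) \<bullet> (z - x) = (w - g) \<bullet> e - (a \<bullet> w - a \<bullet> g)"
      unfolding zx by (simp add: inner_diff_left inner_diff_right inner_commute)
    moreover have "a \<bullet> w - a \<bullet> g > \<gamma>" using ab(2)[OF z(2)[folded w_def]] by (simp add: \<gamma>_def)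
    moreover have "(w - g) \<bullet> e \<le> norm (w - g) * norm e" by (rule norm_cauchy_schwarz)
    moreover have "norm (w - g) \<le> L"
      using norm_triangle_ineq4[of w g] M(2)[OF z(2)[folded w_def]] by (simp add: L_def)
    moreover have "norm (w - g) * norm e \<le> L * (\<gamma> / (2 * L))"
      using \<open>norm (w - g) \<le> L\<close> ne L by (intro mult_mono) auto
    moreover have "L * (\<gamma> / (2 * L)) = \<gamma> / 2" using L by (simp add: field_simps)
    ultimately show False using mono \<gamma> by linarith
  qed
  interpret geo K \<rho>
    by unfold_locales (use hasd int_eq fr_eq gnz cvx strictc intne in auto)
  have conj1: "\<forall>n::real^'n. norm n = 1 \<longrightarrow> (\<exists>!y. y \<in> frontier K \<and> outward_normal \<rho> y = n)"
    using exists_normal[OF bounded] unique_normal by metis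
  have a0K: "a0 \<in> closure K" using a0 interior_subset closure_subset by blast
  have conj2: "\<forall>\<epsilon>>0. \<exists>R>0. \<exists>\<delta>>0. \<forall>n y x g. norm n = 1 \<longrightarrow> y \<in> frontier K \<longrightarrow>
            outward_normal \<rho> y = n \<longrightarrow> norm x > R \<longrightarrow> norm (x /\<^sub>R norm x - n) < \<delta> \<longrightarrow>
            (\<phi> has_derivative (\<lambda>h. g \<bullet> h)) (at x) \<longrightarrow> dist g y < \<epsilon>"
  proof (intro allI impI)
    fix \<epsilon> :: real assume e: "\<epsilon> > 0"
    obtain \<eta> where \<eta>: "\<eta> > 0" and unif: "\<And>n y w. norm n = 1 \<Longrightarrow> y \<in> frontier K \<Longrightarrow> outward_normal \<rho> y = n \<Longrightarrow>
            w \<in> closure K \<Longrightarrow> (y - w) \<bullet> n < \<eta> \<Longrightarrow> norm (w - y) < \<epsilon>"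
      using uniform[OF bounded e] by blast
    define s where "s = min (1/2) (\<eta> / (4 * (2*M + r0)))"
    have MR: "2*M + r0 > 0" using M r0 by simp
    have s: "0 < s" "s \<le> 1" "s * (2*M + r0) \<le> \<eta>/4"
    proof -
      show "0 < s" using \<eta> MR by (simp add: s_def)
      show "s \<le> 1" by (simp add: s_def)
      have "s \<le> \<eta> / (4 * (2*M + r0))" by (simp add: s_def)
      hence "s * (2*M + r0) \<le> \<eta> / (4 * (2*M + r0)) * (2*M + r0)" using MR by (intro mult_right_mono) auto
      also have "\<dots> = \<eta>/4" using MR by (simp add: field_simps)
      finally show "s * (2*M + r0) \<le> \<eta>/4" .
    qed
    define r' where "r' = s * r0"
    have r': "r' > 0" using s r0 by (simp add: r'_def)
    define m0 where "m0 = m1 * (?V * r' ^ ?N)"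
    have m0: "m0 > 0" using m1pos r' Vpos by (simp add: m0_def)
    define A where "A k = {z::real^'n. real k \<le> norm z}" for k :: nat
    have Ab: "A k \<in> sets borel" for k unfolding A_def by (intro borel_closed closed_Collect_le) (auto intro: continuous_intros)
    have "(\<lambda>k. measure gauss (A k)) \<longlonglongrightarrow> measure gauss (\<Inter>k. A k)"
      by (rule finite_measure.finite_Lim_measure_decseq[OF finG]) (auto simp: Ab decseq_def A_def)
    moreover have "(\<Inter>k. A k) = {}"
    proof -
      have "z \<notin> A (nat \<lceil>norm z\<rceil> + 1)" for z
        unfolding A_def by (simp add: not_le) linarith
      thus ?thesis by blast
    qed
    ultimately have "(\<lambda>k. measure gauss (A k)) \<longlonglongrightarrow> 0" by simp
    hence "eventually (\<lambda>k. measure gauss (A k) < cc * m0) sequentially"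
      using cc(1) m0 by (intro order_tendstoD(2)) auto
    then obtain k0 where k0: "measure gauss (A k0) < cc * m0" by (auto simp: eventually_sequentially)
    define \<delta> where "\<delta> = \<eta> / (8 * M)"
    define R where "R = 4 * M * real k0 / \<eta> + 1"
    have \<delta>: "\<delta> > 0" using \<eta> M by (simp add: \<delta>_def)
    have "4 * M * real k0 / \<eta> \<ge> 0" using \<eta> M by simp
    hence R: "R > 0" by (simp add: R_def)
    show "\<exists>R>0. \<exists>\<delta>>0. \<forall>n y x g. norm n = 1 \<longrightarrow> y \<in> frontier K \<longrightarrow>
            outward_normal \<rho> y = n \<longrightarrow> norm x > R \<longrightarrow> norm (x /\<^sub>R norm x - n) < \<delta> \<longrightarrow>
            (\<phi> has_derivative (\<lambda>h. g \<bullet> h)) (at x) \<longrightarrow> dist g y < \<epsilon>"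
    proof -
     have main: "\<forall>n y x g. norm n = 1 \<longrightarrow> y \<in> frontier K \<longrightarrow>
            outward_normal \<rho> y = n \<longrightarrow> norm x > R \<longrightarrow> norm (x /\<^sub>R norm x - n) < \<delta> \<longrightarrow>
            (\<phi> has_derivative (\<lambda>h. g \<bullet> h)) (at x) \<longrightarrow> dist g y < \<epsilon>"
     proof (intro allI impI)
      fix n y x g assume n: "norm (n::real^'n) = 1" and yf: "y \<in> frontier K" and yn: "outward_normal \<rho> y = n"
        and xR: "norm x > R" and xd: "norm (x /\<^sub>R norm x - n) < \<delta>"
        and dg: "(\<phi> has_derivative (\<lambda>h. g \<bullet> h)) (at x)"
      have gK: "g \<in> closure K" by (rule gcl[OF dg])
      have yK: "y \<in> closure K" using yf by (simp add: frontier_def)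
      have "(y - g) \<bullet> n < \<eta>"
      proof (rule ccontr)
        assume "\<not> (y - g) \<bullet> n < \<eta>"
        hence yg: "g \<bullet> n \<le> y \<bullet> n - \<eta>" by (simp add: inner_diff_left)
        define c0 where "c0 = y - s *\<^sub>R (y - a0)"
        have Bsub: "ball c0 r' \<subseteq> interior K"
        proof
          fix w assume w: "w \<in> ball c0 r'"
          define b where "b = a0 + (1/s) *\<^sub>R (w - c0)"
          have "norm (b - a0) = norm (w - c0) / s" using s by (simp add: b_def)
          also have "\<dots> < r' / s" using w s by (intro divide_strict_right_mono) (auto simp: dist_norm norm_minus_commute)
          also have "\<dots> = r0" using s by (simp add: r'_def)
          finally have "b \<in> ball a0 r0" by (simp add: dist_norm norm_minus_commute)
          hence bi: "b \<in> interior K" using r0 by blast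
          have "w = y - s *\<^sub>R (y - b)" using s by (simp add: b_def c0_def algebra_simps)
          thus "w \<in> interior K" using mem_interior_closure_convex_shrink[OF cvx bi yK, of s] s by simp
        qed
        have Bcap: "w \<bullet> n > y \<bullet> n - \<eta>/4" if w: "w \<in> ball c0 r'" for w
        proof -
          have "\<bar>(y - a0) \<bullet> n\<bar> \<le> norm (y - a0) * norm n" by (rule Cauchy_Schwarz_ineq2)
          also have "\<dots> \<le> 2 * M" using n norm_triangle_ineq4[of y a0] M(2)[OF yK] M(2)[OF a0K] by simp
          finally have 1: "\<bar>(y - a0) \<bullet> n\<bar> \<le> 2 * M" .
          have "\<bar>(w - c0) \<bullet> n\<bar> \<le> norm (w - c0) * norm n" by (rule Cauchy_Schwarz_ineq2)
          also have "\<dots> < r'" using n w by (simp add: dist_norm norm_minus_commute)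
          finally have 2: "\<bar>(w - c0) \<bullet> n\<bar> < r'" .
          have "w \<bullet> n = y \<bullet> n - s * ((y - a0) \<bullet> n) + (w - c0) \<bullet> n"
            by (simp add: c0_def algebra_simps inner_diff_left)
          moreover have "s * ((y - a0) \<bullet> n) \<le> s * (2 * M)" using 1 s by (intro mult_left_mono) auto
          ultimately have "w \<bullet> n > y \<bullet> n - s * (2 * M + r0)" using 2 by (simp add: r'_def algebra_simps)
          thus ?thesis using s(3) by linarith
        qed
        have "cc * m0 \<le> cc * measure (target F K) (ball c0 r')"
          using ball_lower[OF r' Bsub] cc(1) by (simp add: m0_def)
        also have "\<dots> = measure gauss (T -` ball c0 r')" using cc(2)[of "ball c0 r'"] by simp
        also have "\<dots> \<le> measure gauss (A k0)"
        proof -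
          have "AE z in lborel. z \<in> T -` ball c0 r' \<longrightarrow> z \<in> A k0"
            using P
          proof eventually_elim
            case (elim z)
            show ?case
            proof
              assume "z \<in> T -` ball c0 r'"
              hence wB: "T z \<in> ball c0 r'" by simp
              define w where "w = T z"
              have wK: "w \<in> closure K" using wB Bsub interior_subset closure_subset unfolding w_def by blast
              have mono: "(w - g) \<bullet> (z - x) \<ge> 0" unfolding w_def using elim by (intro grad_mono[OF phi_convex dg]) auto
              have wg: "(w - g) \<bullet> n > 3 * \<eta> / 4" using Bcap[OF wB] yg by (simp add: w_def inner_diff_left)
              have nwg: "norm (w - g) \<le> 2 * M" using norm_triangle_ineq4[of w g] M(2)[OF wK] M(2)[OF gK] by simp
              define u where "u = x /\<^sub>R norm x"
              have xpos: "norm x > 0" using xR R by linarith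
              have xu: "x = norm x *\<^sub>R u" using xpos by (simp add: u_def)
              have "\<bar>(w - g) \<bullet> (u - n)\<bar> \<le> norm (w - g) * norm (u - n)" by (rule Cauchy_Schwarz_ineq2)
              also have "\<dots> \<le> (2 * M) * \<delta>" using nwg xd M(1) by (intro mult_mono) (auto simp: u_def)
              also have "\<dots> = \<eta> / 4" using M by (simp add: \<delta>_def)
              finally have "\<bar>(w - g) \<bullet> (u - n)\<bar> \<le> \<eta> / 4" .
              hence wu: "(w - g) \<bullet> u \<ge> \<eta> / 2" using wg unfolding inner_diff_right[of "w - g" u n] by linarith
              have "(w - g) \<bullet> x = norm x * ((w - g) \<bullet> u)" by (subst xu) simp
              also have "\<dots> \<ge> norm x * (\<eta> / 2)" using wu xpos by (intro mult_left_mono) auto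
              finally have wx: "(w - g) \<bullet> x \<ge> norm x * (\<eta> / 2)" .
              have "(w - g) \<bullet> z \<le> norm (w - g) * norm z" by (rule norm_cauchy_schwarz)
              also have "\<dots> \<le> 2 * M * norm z" using nwg by (intro mult_right_mono) auto
              finally have wz: "(w - g) \<bullet> z \<le> 2 * M * norm z" .
              have "(w - g) \<bullet> z \<ge> (w - g) \<bullet> x" using mono by (simp add: inner_diff_right)
              hence "2 * M * norm z \<ge> norm x * (\<eta> / 2)" using wx wz by linarith
              moreover have "norm x * (\<eta> / 2) \<ge> R * (\<eta> / 2)" using xR \<eta> by (intro mult_right_mono) auto
              moreover have "R * (\<eta> / 2) = 2 * M * real k0 + \<eta> / 2" using \<eta> by (simp add: R_def field_simps)
              ultimately have "2 * M * norm z \<ge> 2 * M * real k0" using \<eta> by linarith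
              hence "norm z \<ge> real k0" using M by simp
              thus "z \<in> A k0" by (simp add: A_def)
            qed
          qed
          hence "AE z in (gauss::(real^'n) measure). z \<in> T -` ball c0 r' \<longrightarrow> z \<in> A k0"
            by (simp add: AE_gauss_iff)
          hence "emeasure gauss (T -` ball c0 r') \<le> emeasure gauss (A k0)"
            by (rule emeasure_mono_AE) (simp add: Ab)
          thus ?thesis using finite_measure.emeasure_eq_measure[OF finG] by simp
        qed
        finally show False using k0 by simp
      qed
      hence "norm (g - y) < \<epsilon>" using unif[OF n yf yn gK] by simp
      thus "dist g y < \<epsilon>" by (simp add: dist_norm)
     qed
     show ?thesis using main R \<delta> by blast
    qed
  qed
  show ?thesis using conj1 conj2 by blast
qed



end
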